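(* Let $F$ be a finite extension of $\mathbb{Q}_p$ and $\pi=\pi(\chi_1,\chi_2)$ a tamely ramified irreducible admissible infinite-dimensional representation of $\mathrm{GL}_2(F)$ (with $\chi_1=|\cdot|\chi_2$ if $\pi$ is special), $\alpha_i=\chi_i(\varpi)\sqrt q$, $\nu=\alpha_1\alpha_2/q$. Let $\chi:F^*\to\mathbb{C}^*$ be a quasi-character with conductor $\mathfrak{p}^f$, and if $f=0$ assume $|\chi(\varpi)|<|\alpha_2|$. Then the integral $\int_{F^*}\chi(x)\mu_{\alpha_1/\nu}(dx)$ converges and \[\int_{F^*}\chi(x)\mu_{\alpha_1/\nu}(dx)=e(\alpha_1,\alpha_2,\chi)\,\tau(\chi)\,L(\tfrac12,\pi\otimes\chi),\] where $e(\alpha_1,\alpha_2,\chi)=\dfrac{(1-\alpha_1\chi(\varpi)q^{-1})(1-\alpha_2\chi(\varpi)^{-1}q^{-1})(1-\alpha_2\chi(\varpi)q^{-1})}{1-\chi(\varpi)\alpha_2^{-1}}$ if $f=0$ and $\pi$ is spherical; $e=\dfrac{(1-\alpha_1\chi(\varpi)q^{-1})(1-\alpha_2\chi(\varpi)^{-1}q^{-1})}{1-\chi(\varpi)\alpha_2^{-1}}$ if $f=0$ and $\pi$ is special; and $e=(\alpha_1/\nu)^{-f}=(\alpha_2/q)^f$ if $f>0$; the right-hand side being continuously extended across the potential removable singularities at $\chi(\varpi)=q/\alpha_1$ or $q/\alpha_2$.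
   Context: $\mathcal{O}_F$ is the ring of integers, $\varpi$ a uniformizer, $\mathfrak{p}=(\varpi)$, $q=\#\mathcal{O}_F/\mathfrak{p}$, $U=\mathcal{O}_F^\times$, $U^{(n)}=1+\mathfrak{p}^n$, $U^{(0)}=U$; $|\varpi|=q^{-1}$. $\psi:F\to\bar{\mathbb{Q}}^*$ is a fixed additive character with $\mathcal{O}_F\subseteq\ker\psi$ and $\mathfrak{p}^{-1}\not\subseteq\ker\psi$. $dx$ is the Haar measure on $F$ with $\int_{\mathcal{O}_F}dx=1$, $d^\times x=\frac{q}{q-1}\frac{dx}{|x|}$. The conductor of $\chi$ is the largest $\mathfrak{p}^n$ with $U^{(n)}\subseteq\ker\chi$. Gauss sum: $\tau(\chi)=[U:U^{(f)}]\int_{\varpi^{-f}U}\psi(x)\chi(x)d^\times x$. For $\beta\in\mathbb{C}^*$, $\chi_\beta(x)=\beta^{\operatorname{ord}(x)}$, and $\mu_{\alpha_1/\nu}$ is the distribution $\psi(x)\chi_{\alpha_1/\nu}(x)dx$ on $F^*$. For locally constant $g$ on $F^*$, $\int_{F^*}g\,dx:=\lim_{n\to\infty}\int_{-n\le\operatorname{ord}x\le n}g\,dx$. Tamely ramified means the conductor of $\pi$ divides $\mathfrak{p}$; then $\chi_1,\chi_2$ are unramified; $\pi$ is special if $\chi_1\chi_2^{-1}=|\cdot|^{\pm1}$ and spherical otherwise. $L(s,\pi\otimes\chi)$ is the standard local L-factor. *)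

theory Defs
  imports "HOL-Analysis.Analysis"
begin

text \<open>A non-archimedean local field of characteristic 0 (= finite extension of Q_p),
  given by a normalized discrete valuation ord (meaningful on nonzero elements),
  a uniformizer w and the residue field cardinality q.\<close>

definition ball_v :: "('a::field \<Rightarrow> int) \<Rightarrow> 'a \<Rightarrow> int \<Rightarrow> 'a set" where
  "ball_v ord a n = {x. x = a \<or> ord (x - a) \<ge> n}"

definition absv :: "('a::field \<Rightarrow> int) \<Rightarrow> nat \<Rightarrow> 'a \<Rightarrow> real" where
  "absv ord q x = (if x = 0 then 0 else real q powr (- real_of_int (ord x)))"

definition nonarch_local_field :: "('a::field_char_0 \<Rightarrow> int) \<Rightarrow> 'a \<Rightarrow> nat \<Rightarrow> bool" where
  "nonarch_local_field ord w q \<longleftrightarrow>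
     (\<forall>x y. x \<noteq> 0 \<longrightarrow> y \<noteq> 0 \<longrightarrow> ord (x * y) = ord x + ord y) \<and>
     (\<forall>x y. x \<noteq> 0 \<longrightarrow> y \<noteq> 0 \<longrightarrow> x + y \<noteq> 0 \<longrightarrow> ord (x + y) \<ge> min (ord x) (ord y)) \<and>
     w \<noteq> 0 \<and> ord w = 1 \<and>
     (\<exists>R. finite R \<and> card R = q \<and> R \<subseteq> ball_v ord 0 0 \<and>
          (\<forall>x \<in> ball_v ord 0 0. \<exists>!r. r \<in> R \<and> x - r \<in> ball_v ord 0 1)) \<and>
     (\<forall>X :: nat \<Rightarrow> 'a.
        (\<forall>e>0. \<exists>N. \<forall>m\<ge>N. \<forall>n\<ge>N. absv ord q (X m - X n) < e) \<longrightarrow>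
        (\<exists>l. \<forall>e>0. \<exists>N. \<forall>n\<ge>N. absv ord q (X n - l) < e))"

definition is_haar :: "('a::field \<Rightarrow> int) \<Rightarrow> 'a measure \<Rightarrow> bool" where
  "is_haar ord M \<longleftrightarrow> space M = UNIV \<and>
     sets M = sigma_sets UNIV (range (\<lambda>(a, n). ball_v ord a n)) \<and>
     (\<forall>A \<in> sets M. \<forall>a. emeasure M ((\<lambda>x. a + x) ` A) = emeasure M A) \<and>
     emeasure M (ball_v ord 0 0) = 1"

definition add_char :: "('a::field \<Rightarrow> int) \<Rightarrow> ('a \<Rightarrow> complex) \<Rightarrow> bool" where
  "add_char ord psi \<longleftrightarrow> (\<forall>x y. psi (x + y) = psi x * psi y) \<and> (\<forall>x. psi x \<noteq> 0) \<and>
     (\<forall>x \<in> ball_v ord 0 0. psi x = 1) \<and> (\<exists>x \<in> ball_v ord 0 (-1). psi x \<noteq> 1)"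

definition quasi_char :: "('a::field \<Rightarrow> int) \<Rightarrow> nat \<Rightarrow> ('a \<Rightarrow> complex) \<Rightarrow> bool" where
  "quasi_char ord q chi \<longleftrightarrow>
     (\<forall>x y. x \<noteq> 0 \<longrightarrow> y \<noteq> 0 \<longrightarrow> chi (x * y) = chi x * chi y) \<and> (\<forall>x. x \<noteq> 0 \<longrightarrow> chi x \<noteq> 0) \<and>
     (\<forall>x. x \<noteq> 0 \<longrightarrow> (\<forall>e>0. \<exists>d>0. \<forall>y. y \<noteq> 0 \<longrightarrow> absv ord q (y - x) < d \<longrightarrow> cmod (chi y - chi x) < e))"

definition U_n :: "('a::field \<Rightarrow> int) \<Rightarrow> nat \<Rightarrow> 'a set" where
  "U_n ord n = (if n = 0 then {x. x \<noteq> 0 \<and> ord x = 0} else {x. x = 1 \<or> ord (x - 1) \<ge> int n})"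

definition conductor_exp :: "('a::field \<Rightarrow> int) \<Rightarrow> ('a \<Rightarrow> complex) \<Rightarrow> nat" where
  "conductor_exp ord chi = (LEAST n. \<forall>x \<in> U_n ord n. chi x = 1)"

text \<open>Gauss sum tau(chi) = [U:U^(f)] * integral over w^(-f) U of psi chi d^x x,
  with d^x x = q/(q-1) dx/|x|.\<close>
definition gauss_sum :: "('a::field \<Rightarrow> int) \<Rightarrow> 'a \<Rightarrow> nat \<Rightarrow> 'a measure \<Rightarrow> ('a \<Rightarrow> complex)
    \<Rightarrow> ('a \<Rightarrow> complex) \<Rightarrow> complex" where
  "gauss_sum ord w q M psi chi =
     (let f = conductor_exp ord chi; U = U_n ord 0; Uf = U_n ord f in
       of_nat (card ((\<lambda>u. (\<lambda>y. u * y) ` Uf) ` U)) *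
       (LINT x : ((\<lambda>u. w powi (- int f) * u) ` U) | M.
          complex_of_real (real q / (real q - 1) / absv ord q x) * psi x * chi x))"

definition L_GL1 :: "('a::field \<Rightarrow> int) \<Rightarrow> 'a \<Rightarrow> nat \<Rightarrow> ('a \<Rightarrow> complex) \<Rightarrow> real \<Rightarrow> complex" where
  "L_GL1 ord w q eta s = (if conductor_exp ord eta = 0
      then 1 / (1 - eta w * complex_of_real (real q powr (- s))) else 1)"

text \<open>Standard L-factor of pi(chi1,chi2) twisted by chi: L(s,chi1 chi) L(s,chi2 chi) for
  the irreducible principal series (spherical case), L(s,chi1 chi) for the special
  representation with chi1 = |.| chi2.\<close>
definition L_pi :: "('a::field \<Rightarrow> int) \<Rightarrow> 'a \<Rightarrow> nat \<Rightarrow> bool \<Rightarrow> ('a \<Rightarrow> complex) \<Rightarrow> ('a \<Rightarrow> complex)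
    \<Rightarrow> ('a \<Rightarrow> complex) \<Rightarrow> real \<Rightarrow> complex" where
  "L_pi ord w q special chi1 chi2 chi s =
     (if special then L_GL1 ord w q (\<lambda>x. chi1 x * chi x) s
      else L_GL1 ord w q (\<lambda>x. chi1 x * chi x) s * L_GL1 ord w q (\<lambda>x. chi2 x * chi x) s)"

text \<open>The factor e(alpha1, alpha2, chi); z stands for chi(w), f for the conductor exponent.\<close>
definition e_fac :: "bool \<Rightarrow> nat \<Rightarrow> complex \<Rightarrow> complex \<Rightarrow> nat \<Rightarrow> complex \<Rightarrow> complex" where
  "e_fac special q a1 a2 f z =
     (if f = 0 then
        (if special then
           (1 - a1 * z / of_nat q) * (1 - a2 / z / of_nat q) / (1 - z / a2)
         else
           (1 - a1 * z / of_nat q) * (1 - a2 / z / of_nat q) * (1 - a2 * z / of_nat q) / (1 - z / a2))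
      else (a2 / of_nat q) ^ f)"

end

theory Submission
  imports Defs
begin


definition vge :: "('a::field \<Rightarrow> int) \<Rightarrow> 'a \<Rightarrow> int \<Rightarrow> bool" where
  "vge ord x n \<longleftrightarrow> x = 0 \<or> ord x \<ge> n"

lemma ball_v_iff: "x \<in> ball_v ord a n \<longleftrightarrow> vge ord (x - a) n"
  by (auto simp: ball_v_def vge_def)

locale lf =
  fixes ord :: "'a::field_char_0 \<Rightarrow> int" and w :: 'a and q :: nat
  assumes F: "nonarch_local_field ord w q"
begin

lemma ord_mult: "x \<noteq> 0 \<Longrightarrow> y \<noteq> 0 \<Longrightarrow> ord (x * y) = ord x + ord y"
  using F unfolding nonarch_local_field_def by blast

lemma ord_ultra: "x \<noteq> 0 \<Longrightarrow> y \<noteq> 0 \<Longrightarrow> x + y \<noteq> 0 \<Longrightarrow> ord (x + y) \<ge> min (ord x) (ord y)"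
  using F unfolding nonarch_local_field_def by blast

lemma w_nz: "w \<noteq> 0" and ord_w: "ord w = 1"
  using F unfolding nonarch_local_field_def by blast+

lemma ord_1[simp]: "ord 1 = 0"
  using ord_mult[of 1 1] by simp

lemma ord_inverse: "x \<noteq> 0 \<Longrightarrow> ord (inverse x) = - ord x"
  using ord_mult[of x "inverse x"] by simp

lemma ord_divide: "x \<noteq> 0 \<Longrightarrow> y \<noteq> 0 \<Longrightarrow> ord (x / y) = ord x - ord y"
  by (simp add: divide_inverse ord_mult ord_inverse)

lemma ord_m1[simp]: "ord (-1) = 0"
  using ord_mult[of "-1" "-1"] by simp

lemma ord_uminus[simp]: "ord (- x) = ord x"
proof (cases "x = 0")
  case False thus ?thesis using ord_mult[of "-1" x] by simp
qed simp

lemma ord_minus_commute: "ord (x - y) = ord (y - x)"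
  by (metis minus_diff_eq ord_uminus)

lemma ord_power: "x \<noteq> 0 \<Longrightarrow> ord (x ^ n) = int n * ord x"
  by (induction n) (auto simp: ord_mult algebra_simps)

lemma ord_powi: "x \<noteq> 0 \<Longrightarrow> ord (x powi k) = k * ord x"
  by (cases "k \<ge> 0") (auto simp: power_int_def ord_power ord_inverse)

lemma ord_w_powi[simp]: "ord (w powi k) = k"
  using ord_powi[OF w_nz] ord_w by simp

lemma ord_strict: assumes "x \<noteq> 0" "y \<noteq> 0" "ord x < ord y"
  shows "x + y \<noteq> 0" "ord (x + y) = ord x"
proof -
  show nz: "x + y \<noteq> 0"
  proof
    assume "x + y = 0" hence "x = - y" by (simp add: eq_neg_iff_add_eq_0)
    thus False using assms by simp
  qed
  have "ord (x + y) \<ge> ord x" using ord_ultra[OF assms(1,2) nz] assms(3) by simp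
  moreover have "ord x \<ge> min (ord (x + y)) (ord (- y))"
    using ord_ultra[of "x + y" "- y"] nz assms by simp
  ultimately show "ord (x + y) = ord x" using assms(3) by auto
qed

lemma vge_0[simp]: "vge ord 0 n" by (simp add: vge_def)

lemma vge_add: "vge ord x n \<Longrightarrow> vge ord y n \<Longrightarrow> vge ord (x + y) n"
  unfolding vge_def using ord_ultra[of x y] by fastforce

lemma vge_uminus[simp]: "vge ord (- x) n \<longleftrightarrow> vge ord x n"
  by (simp add: vge_def)

lemma vge_diff: "vge ord x n \<Longrightarrow> vge ord y n \<Longrightarrow> vge ord (x - y) n"
  using vge_add[of x n "- y"] by simp

lemma vge_mono: "vge ord x n \<Longrightarrow> m \<le> n \<Longrightarrow> vge ord x m"
  by (auto simp: vge_def)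

lemma vge_mult: "vge ord x n \<Longrightarrow> vge ord y m \<Longrightarrow> vge ord (x * y) (n + m)"
  by (cases "x = 0"; cases "y = 0") (auto simp: vge_def ord_mult)

lemma vge_commute: "vge ord (x - y) n \<longleftrightarrow> vge ord (y - x) n"
  by (metis minus_diff_eq vge_uminus)

lemma ball_mem_center[simp]: "a \<in> ball_v ord a n"
  by (simp add: ball_v_iff)

lemma ball_subset: "b \<in> ball_v ord a n \<Longrightarrow> n \<le> m \<Longrightarrow> ball_v ord b m \<subseteq> ball_v ord a n"
proof
  fix x assume b: "b \<in> ball_v ord a n" and nm: "n \<le> m" and x: "x \<in> ball_v ord b m"
  have "vge ord (x - b) n" using x nm vge_mono by (auto simp: ball_v_iff)
  moreover have "vge ord (b - a) n" using b by (simp add: ball_v_iff)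
  ultimately have "vge ord ((x - b) + (b - a)) n" by (rule vge_add)
  thus "x \<in> ball_v ord a n" by (simp add: ball_v_iff)
qed


lemma ball_eq: "b \<in> ball_v ord a n \<Longrightarrow> ball_v ord b n = ball_v ord a n"
proof
  assume b: "b \<in> ball_v ord a n"
  show "ball_v ord b n \<subseteq> ball_v ord a n" using ball_subset[OF b] by simp
  have "a \<in> ball_v ord b n" using b by (simp add: ball_v_iff vge_commute)
  thus "ball_v ord a n \<subseteq> ball_v ord b n" using ball_subset by simp
qed

lemma ball_inter: "x \<in> ball_v ord a n \<Longrightarrow> x \<in> ball_v ord b n \<Longrightarrow> ball_v ord a n = ball_v ord b n"
  using ball_eq by metis

lemma vge_w_powi: "vge ord (w powi n) n"
  by (simp add: vge_def)

lemma w_powi_nz[simp]: "w powi n \<noteq> 0"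
  using w_nz by simp

definition Rs where "Rs = (SOME R. finite R \<and> card R = q \<and> R \<subseteq> ball_v ord 0 0 \<and>
          (\<forall>x \<in> ball_v ord 0 0. \<exists>!r. r \<in> R \<and> x - r \<in> ball_v ord 0 1))"

lemma Rs: "finite Rs" "card Rs = q" "Rs \<subseteq> ball_v ord 0 0"
   "\<And>x. x \<in> ball_v ord 0 0 \<Longrightarrow> \<exists>!r. r \<in> Rs \<and> x - r \<in> ball_v ord 0 1"
proof -
  have "\<exists>R. finite R \<and> card R = q \<and> R \<subseteq> ball_v ord 0 0 \<and>
          (\<forall>x \<in> ball_v ord 0 0. \<exists>!r. r \<in> R \<and> x - r \<in> ball_v ord 0 1)"
    using F unfolding nonarch_local_field_def by blast
  from someI_ex[OF this] show "finite Rs" "card Rs = q" "Rs \<subseteq> ball_v ord 0 0"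
   "\<And>x. x \<in> ball_v ord 0 0 \<Longrightarrow> \<exists>!r. r \<in> Rs \<and> x - r \<in> ball_v ord 0 1"
    unfolding Rs_def by blast+
qed

lemma vge_cancel_w: "vge ord (w powi n * x) m \<Longrightarrow> vge ord x (m - n)"
  using w_nz by (cases "x = 0") (auto simp: vge_def ord_mult)

lemma q_ge2: "q \<ge> 2"
proof -
  have z: "(0::'a) \<in> ball_v ord 0 0" "(1::'a) \<in> ball_v ord 0 0" by (auto simp: ball_v_iff vge_def)
  obtain r0 where r0: "r0 \<in> Rs" "0 - r0 \<in> ball_v ord 0 1" using Rs(4)[OF z(1)] by blast
  obtain r1 where r1: "r1 \<in> Rs" "1 - r1 \<in> ball_v ord 0 1" using Rs(4)[OF z(2)] by blast
  have "r0 \<noteq> r1"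
  proof
    assume "r0 = r1"
    have h1: "vge ord (1 - r1) 1" "vge ord (0 - r0) 1" using r0 r1 by (simp_all add: ball_v_iff)
    have "vge ord ((1 - r1) - (0 - r0)) 1" by (rule vge_diff[OF h1])
    thus False using \<open>r0 = r1\<close> by (simp add: vge_def)
  qed
  hence "card {r0, r1} \<le> card Rs" using r0 r1 Rs(1) by (intro card_mono) auto
  thus ?thesis using \<open>r0 \<noteq> r1\<close> Rs(2) by simp
qed

lemma decomp_cover: "ball_v ord a n = (\<Union>r\<in>Rs. ball_v ord (a + w powi n * r) (n + 1))"
proof (intro equalityI subsetI)
  fix x assume x: "x \<in> ball_v ord a n"
  define y where "y = (x - a) / w powi n"
  have xy: "x - a = w powi n * y" using w_powi_nz[of n] unfolding y_def by (simp del: w_powi_nz)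
  have "vge ord y 0" using x vge_cancel_w[of n y n] by (simp add: ball_v_iff xy)
  hence "y \<in> ball_v ord 0 0" by (simp add: ball_v_iff)
  then obtain r where r: "r \<in> Rs" "y - r \<in> ball_v ord 0 1" using Rs(4) by blast
  have "vge ord (w powi n * (y - r)) (n + 1)"
    using vge_mult[OF vge_w_powi, of "y - r" 1 n] r(2) by (simp add: ball_v_iff)
  moreover have "w powi n * (y - r) = x - (a + w powi n * r)" using xy by (simp add: algebra_simps)
  ultimately show "x \<in> (\<Union>r\<in>Rs. ball_v ord (a + w powi n * r) (n + 1))"
    using r(1) by (auto simp: ball_v_iff)
next
  fix x assume "x \<in> (\<Union>r\<in>Rs. ball_v ord (a + w powi n * r) (n + 1))"
  then obtain r where r: "r \<in> Rs" "x \<in> ball_v ord (a + w powi n * r) (n + 1)" by blast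
  have "vge ord r 0" using r(1) Rs(3) by (auto simp: ball_v_iff)
  hence "vge ord (w powi n * r) (n + 0)" by (intro vge_mult vge_w_powi)
  hence "a + w powi n * r \<in> ball_v ord a n" by (simp add: ball_v_iff)
  from ball_subset[OF this, of "n + 1"] r(2) show "x \<in> ball_v ord a n" by auto
qed

lemma decomp_disj: "disjoint_family_on (\<lambda>r. ball_v ord (a + w powi n * r) (n + 1)) Rs"
  unfolding disjoint_family_on_def
proof (intro ballI impI)
  fix r1 r2 assume r: "r1 \<in> Rs" "r2 \<in> Rs" "r1 \<noteq> r2"
  show "ball_v ord (a + w powi n * r1) (n + 1) \<inter> ball_v ord (a + w powi n * r2) (n + 1) = {}"
  proof (rule ccontr)
    assume "\<not> ?thesis"
    then obtain x where "x \<in> ball_v ord (a + w powi n * r1) (n + 1)" "x \<in> ball_v ord (a + w powi n * r2) (n + 1)"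
      by blast
    hence h: "vge ord (x - (a + w powi n * r2)) (n + 1)" "vge ord (x - (a + w powi n * r1)) (n + 1)"
      by (auto simp only: ball_v_iff)
    have "vge ord ((x - (a + w powi n * r2)) - (x - (a + w powi n * r1))) (n + 1)"
      by (rule vge_diff[OF h])
    hence "vge ord (w powi n * (r1 - r2)) (n + 1)" by (simp add: algebra_simps)
    hence "vge ord (r1 - r2) 1" using vge_cancel_w by fastforce
    hence m: "r1 - r2 \<in> ball_v ord 0 1" by (simp add: ball_v_iff)
    have "r1 \<in> ball_v ord 0 0" using r Rs(3) by auto
    from Rs(4)[OF this] r m show False by (auto simp: ball_v_iff)
  qed
qed

end

locale lfm = lf +
  fixes M :: "'a measure"
  assumes haar: "is_haar ord M"
begin

lemma space_M[simp]: "space M = UNIV" using haar by (simp add: is_haar_def)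

lemma sets_ball[measurable, simp]: "ball_v ord a n \<in> sets M"
  using haar unfolding is_haar_def by auto

lemma emeasure_transl: "A \<in> sets M \<Longrightarrow> emeasure M ((\<lambda>x. a + x) ` A) = emeasure M A"
  using haar unfolding is_haar_def by blast

lemma emeasure_ball_0: "emeasure M (ball_v ord a n) = emeasure M (ball_v ord 0 n)"
proof -
  have "ball_v ord a n = (\<lambda>x. a + x) ` ball_v ord 0 n"
  proof (rule set_eqI)
    fix x show "x \<in> ball_v ord a n \<longleftrightarrow> x \<in> (\<lambda>x. a + x) ` ball_v ord 0 n"
    proof
      assume "x \<in> ball_v ord a n" hence "x - a \<in> ball_v ord 0 n" by (simp add: ball_v_iff)
      thus "x \<in> (\<lambda>x. a + x) ` ball_v ord 0 n" by (rule rev_image_eqI) simp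
    qed (auto simp: ball_v_iff)
  qed
  thus ?thesis using emeasure_transl[of "ball_v ord 0 n" a] by simp
qed

lemma emeasure_step: "emeasure M (ball_v ord 0 n) = of_nat q * emeasure M (ball_v ord 0 (n + 1))"
proof -
  have "emeasure M (ball_v ord 0 n) = (\<Sum>r\<in>Rs. emeasure M (ball_v ord (0 + w powi n * r) (n + 1)))"
    by (subst decomp_cover[of 0 n], rule sum_emeasure[symmetric]) (auto simp: decomp_disj[of 0 n, simplified] Rs)
  also have "\<dots> = (\<Sum>r\<in>Rs. emeasure M (ball_v ord 0 (n + 1)))"
    by (intro sum.cong refl) (rule emeasure_ball_0)
  finally show ?thesis using Rs(2) by simp
qed

lemma emeasure_ball_00: "emeasure M (ball_v ord 0 0) = 1"
  using haar by (simp add: is_haar_def)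

lemma emeasure_ball_nat: "emeasure M (ball_v ord 0 (int k)) = ennreal (real q powr (- real k))
   \<and> emeasure M (ball_v ord 0 (- int k)) = ennreal (real q powr (real k))"
proof (induction k)
  case 0 thus ?case using emeasure_ball_00 q_ge2 by simp
next
  case (Suc k)
  have q: "real q > 0" using q_ge2 by simp
  have "ennreal (real q) * emeasure M (ball_v ord 0 (int k + 1)) = ennreal (real q) * ennreal (real q powr (- real (Suc k)))"
  proof -
    have "ennreal (real q) * ennreal (real q powr (- real (Suc k))) = ennreal (real q * real q powr (- real (Suc k)))"
      using q by (simp add: ennreal_mult)
    also have "real q * real q powr (- real (Suc k)) = real q powr (- real k)"
      using q by (simp add: powr_diff powr_minus field_simps powr_add)
    finally show ?thesis using Suc.IH emeasure_step[of "int k"] by (simp add: ennreal_of_nat_eq_real_of_nat)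
  qed
  hence A: "emeasure M (ball_v ord 0 (int (Suc k))) = ennreal (real q powr (- real (Suc k)))"
    using q by (subst (asm) ennreal_mult_cancel_left) (auto simp: add.commute)
  have "emeasure M (ball_v ord 0 (- int (Suc k))) = ennreal (real q) * ennreal (real q powr (real k))"
    using emeasure_step[of "- int (Suc k)"] Suc.IH by (simp add: ennreal_of_nat_eq_real_of_nat)
  also have "\<dots> = ennreal (real q powr (real (Suc k)))"
    using q by (simp add: ennreal_mult[symmetric] powr_add field_simps)
  finally show ?case using A by simp
qed

lemma emeasure_ball: "emeasure M (ball_v ord a n) = ennreal (real q powr (- of_int n))"
proof (cases "n \<ge> 0")
  case True
  then obtain k where "n = int k" by (metis nonneg_int_cases)
  thus ?thesis using emeasure_ball_nat[of k] emeasure_ball_0[of a n] by simp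
next
  case False
  then obtain k where "n = - int k" by (metis neg_int_cases less_imp_le not_le minus_minus)
  thus ?thesis using emeasure_ball_nat[of k] emeasure_ball_0[of a n] by simp
qed

lemma measure_ball: "measure M (ball_v ord a n) = real q powr (- of_int n)"
  by (simp add: measure_def emeasure_ball)

lemma emeasure_ball_fin: "emeasure M (ball_v ord a n) < \<infinity>"
  by (simp add: emeasure_ball)


lemma vge_unit_mult: "u \<noteq> 0 \<Longrightarrow> ord u = 0 \<Longrightarrow> vge ord (u * y) N \<longleftrightarrow> vge ord y N"
  by (cases "y = 0") (auto simp: vge_def ord_mult)

definition per :: "int \<Rightarrow> ('a \<Rightarrow> complex) \<Rightarrow> bool" where
  "per N h \<longleftrightarrow> (\<forall>x y. vge ord y N \<longrightarrow> h (x + y) = h x)"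

lemma integral_ind_ball: "integral\<^sup>L M (\<lambda>x. indicator (ball_v ord a n) x *\<^sub>R (c::complex)) = measure M (ball_v ord a n) *\<^sub>R c"
  using emeasure_ball_fin by (subst integral_scaleR_left) auto

lemma integrable_ind_ball: "integrable M (\<lambda>x. indicator (ball_v ord a n) x *\<^sub>R (c::complex))"
  using emeasure_ball_fin by auto

lemma ball_preimage: assumes "u \<noteq> 0" "ord u = 0"
  shows "u * x + t \<in> ball_v ord a n \<longleftrightarrow> x \<in> ball_v ord ((a - t) / u) n"
proof -
  have "u * x + t - a = u * (x - (a - t) / u)" using assms(1) by (simp add: field_simps)
  thus ?thesis using vge_unit_mult[OF assms] by (simp add: ball_v_iff)
qed

lemma L2_aux:
  fixes h :: "'a \<Rightarrow> complex"
  assumes u: "u \<noteq> 0" "ord u = 0"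
  shows "N - n = int d \<Longrightarrow> (\<forall>x. x \<notin> ball_v ord a n \<longrightarrow> h x = 0) \<Longrightarrow> per N h \<Longrightarrow>
    integrable M h \<and> integrable M (\<lambda>x. h (u * x + t)) \<and> integral\<^sup>L M (\<lambda>x. h (u * x + t)) = integral\<^sup>L M h"
proof (induction d arbitrary: a n h)
  case 0
  hence nN: "n = N" by simp
  define c where "c = h a"
  have hh: "h x = indicator (ball_v ord a N) x *\<^sub>R c" for x
  proof (cases "x \<in> ball_v ord a N")
    case True
    hence "vge ord (x - a) N" by (simp add: ball_v_iff)
    hence "h (a + (x - a)) = h a" using 0(3) unfolding per_def by blast
    thus ?thesis using True by (simp add: c_def)
  qed (use 0(2) nN in auto)
  have hT: "h (u * x + t) = indicator (ball_v ord ((a - t) / u) N) x *\<^sub>R c" for x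
    using hh[of "u * x + t"] ball_preimage[OF u] by (simp add: indicator_def)
  have e1: "h = (\<lambda>x. indicator (ball_v ord a N) x *\<^sub>R c)" using hh by auto
  have e2: "(\<lambda>x. h (u * x + t)) = (\<lambda>x. indicator (ball_v ord ((a - t) / u) N) x *\<^sub>R c)"
    using hT by auto
  show ?case
    unfolding e2 unfolding e1 using integrable_ind_ball integral_ind_ball measure_ball by simp
next
  case (Suc d)
  define B where "B r = ball_v ord (a + w powi n * r) (n + 1)" for r
  define hr where "hr r x = indicator (B r) x *\<^sub>R h x" for r x
  have disj: "disjoint_family_on B Rs" unfolding B_def by (rule decomp_disj)
  have cov: "ball_v ord a n = (\<Union>r\<in>Rs. B r)" unfolding B_def by (rule decomp_cover)
  have hsum: "h x = (\<Sum>r\<in>Rs. hr r x)" for x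
  proof -
    have "(\<Sum>r\<in>Rs. hr r x) = (\<Sum>r\<in>Rs. indicator (B r) x) *\<^sub>R h x"
      unfolding hr_def by (simp add: scaleR_sum_left)
    also have "(\<Sum>r\<in>Rs. indicator (B r) x) = (indicator (ball_v ord a n) x :: real)"
      unfolding cov by (rule indicator_UN_disjoint[symmetric, OF Rs(1) disj])
    finally show ?thesis using Suc.prems(2) by (cases "x \<in> ball_v ord a n") auto
  qed
  have IH: "integrable M (hr r) \<and> integrable M (\<lambda>x. hr r (u * x + t)) \<and> integral\<^sup>L M (\<lambda>x. hr r (u * x + t)) = integral\<^sup>L M (hr r)" if r: "r \<in> Rs" for r
  proof (rule Suc.IH[of "n + 1"])
    show "N - (n + 1) = int d" using Suc.prems(1) by simp
    show "\<forall>x. x \<notin> ball_v ord (a + w powi n * r) (n + 1) \<longrightarrow> hr r x = 0"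
      by (simp add: hr_def B_def)
    show "per N (hr r)" unfolding per_def
    proof (intro allI impI)
      fix x y assume y: "vge ord y N"
      have y': "vge ord y (n + 1)" using y Suc.prems(1) vge_mono by fastforce
      have "x + y \<in> B r \<longleftrightarrow> x \<in> B r"
      proof -
        have "x + y - c = (x - c) + y" "x - c = (x + y - c) + (- y)" for c by simp_all
        thus ?thesis unfolding B_def ball_v_iff using vge_add y' by (metis vge_uminus)
      qed
      thus "hr r (x + y) = hr r x" using Suc.prems(3) y by (simp add: hr_def per_def indicator_def)
    qed
  qed
  have hf: "h = (\<lambda>x. \<Sum>r\<in>Rs. hr r x)" by (rule ext) (rule hsum)
  have hf2: "(\<lambda>x. h (u * x + t)) = (\<lambda>x. \<Sum>r\<in>Rs. hr r (u * x + t))" by (rule ext) (rule hsum)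
  have "integral\<^sup>L M (\<lambda>x. \<Sum>r\<in>Rs. hr r x) = (\<Sum>r\<in>Rs. integral\<^sup>L M (hr r))"
    by (rule Bochner_Integration.integral_sum) (use IH in blast)
  moreover have "integral\<^sup>L M (\<lambda>x. \<Sum>r\<in>Rs. hr r (u * x + t)) = (\<Sum>r\<in>Rs. integral\<^sup>L M (\<lambda>x. hr r (u * x + t)))"
    by (rule Bochner_Integration.integral_sum) (use IH in blast)
  moreover have "integrable M (\<lambda>x. \<Sum>r\<in>Rs. hr r x)"
    by (rule Bochner_Integration.integrable_sum) (use IH in blast)
  moreover have "integrable M (\<lambda>x. \<Sum>r\<in>Rs. hr r (u * x + t))"
    by (rule Bochner_Integration.integrable_sum) (use IH in blast)
  ultimately have "integrable M h \<and> integrable M (\<lambda>x. h (u * x + t)) \<and> integral\<^sup>L M (\<lambda>x. h (u * x + t)) = integral\<^sup>L M h"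
    using IH by (simp only: hf2, simp only: hf, simp)
  thus ?case .
qed

lemma L2:
  fixes h :: "'a \<Rightarrow> complex"
  assumes "u \<noteq> 0" "ord u = 0" "n \<le> N" "\<And>x. x \<notin> ball_v ord a n \<Longrightarrow> h x = 0" "per N h"
  shows "integrable M h" "integrable M (\<lambda>x. h (u * x + t))" "integral\<^sup>L M (\<lambda>x. h (u * x + t)) = integral\<^sup>L M h"
  using L2_aux[OF assms(1,2), of N n "nat (N - n)" a h t] assms(3-) by auto

end

lemma nss: fixes c :: complex assumes h: "\<And>k::nat. cmod (c ^ k - 1) < 1/2" shows "c = 1"
proof (rule ccontr)
  assume c: "c \<noteq> 1"
  define d where "d j = cmod (c ^ (2 ^ j) - 1)" for j :: nat
  have step: "d (Suc j) \<ge> 3/2 * d j" for j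
  proof -
    have e: "c ^ (2 ^ Suc j) - 1 = (c ^ (2 ^ j) - 1) * ((c ^ (2 ^ j) - 1) + 2)"
      by (simp add: power_mult algebra_simps power2_eq_square)
    have "cmod ((c ^ (2 ^ j) - 1) + 2) \<ge> 2 - cmod (c ^ (2 ^ j) - 1)"
      using norm_triangle_ineq2[of 2 "- (c ^ (2 ^ j) - 1)"] by (simp add: add.commute norm_minus_commute)
    hence g: "cmod ((c ^ (2 ^ j) - 1) + 2) \<ge> 3/2" using h[of "2^j"] by linarith
    have "d (Suc j) = d j * cmod ((c ^ (2 ^ j) - 1) + 2)" unfolding d_def e by (simp add: norm_mult)
    moreover have "d j * (3/2) \<le> d j * cmod ((c ^ (2 ^ j) - 1) + 2)"
      by (rule mult_left_mono[OF g]) (simp add: d_def)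
    ultimately show ?thesis by (simp add: mult.commute)
  qed
  have lb: "d j \<ge> (3/2) ^ j * d 0" for j
  proof (induction j)
    case (Suc j) thus ?case using step[of j] by (simp add: mult_left_mono order_trans)
  qed simp
  have d0: "d 0 > 0" using c by (simp add: d_def)
  obtain j where "1 / d 0 < (3/2::real) ^ j" using real_arch_pow[of "3/2"] by auto
  hence "(3/2) ^ j * d 0 > 1" using d0 by (simp add: field_simps)
  moreover have "d j < 1/2" using h by (simp add: d_def)
  ultimately show False using lb[of j] by linarith
qed

context lf begin

lemma qc_mult: "quasi_char ord q chi \<Longrightarrow> x \<noteq> 0 \<Longrightarrow> y \<noteq> 0 \<Longrightarrow> chi (x * y) = chi x * chi y"
  by (simp add: quasi_char_def)
lemma qc_nz: "quasi_char ord q chi \<Longrightarrow> x \<noteq> 0 \<Longrightarrow> chi x \<noteq> 0"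
  by (simp add: quasi_char_def)
lemma qc_1: "quasi_char ord q chi \<Longrightarrow> chi 1 = 1"
  using qc_mult[of chi 1 1] qc_nz[of chi 1] by simp

lemma qc_power: "quasi_char ord q chi \<Longrightarrow> x \<noteq> 0 \<Longrightarrow> chi (x ^ k) = chi x ^ k"
  by (induction k) (simp_all add: qc_1 qc_mult)

lemma qc_inverse: "quasi_char ord q chi \<Longrightarrow> x \<noteq> 0 \<Longrightarrow> chi (inverse x) = inverse (chi x)"
  using qc_mult[of chi x "inverse x"] qc_1[of chi] qc_nz[of chi x]
  by (simp add: field_simps)

lemma qc_powi: "quasi_char ord q chi \<Longrightarrow> x \<noteq> 0 \<Longrightarrow> chi (x powi k) = chi x powi k"
  by (cases "k \<ge> 0") (auto simp: power_int_def qc_power qc_inverse)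

lemma U0_iff: "x \<in> U_n ord 0 \<longleftrightarrow> x \<noteq> 0 \<and> ord x = 0"
  by (simp add: U_n_def)

lemma Un_iff: "n > 0 \<Longrightarrow> x \<in> U_n ord n \<longleftrightarrow> vge ord (x - 1) (int n)"
  by (auto simp: U_n_def vge_def)

lemma unit_near1: assumes "vge ord (x - 1) m" "m > 0" shows "x \<noteq> 0" "ord x = 0"
proof -
  show "ord x = 0"
  proof (cases "x = 1")
    case False
    hence "ord (x - 1) > ord 1" using assms by (auto simp: vge_def)
    from ord_strict(2)[OF _ _ this] False show ?thesis by simp
  qed simp
  show "x \<noteq> 0"
  proof
    assume "x = 0" hence "vge ord (-1) m" using assms(1) by simp
    thus False using assms(2) unfolding vge_def by simp
  qed
qed

lemma Un_unit: "x \<in> U_n ord n \<Longrightarrow> x \<noteq> 0 \<and> ord x = 0"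
proof (cases "n = 0")
  case False
  assume x: "x \<in> U_n ord n"
  hence "vge ord (x - 1) (int n)" using False by (simp add: Un_iff)
  thus ?thesis using unit_near1[of x "int n"] False by simp
qed (simp add: U0_iff)

lemma Un_mono: "m \<le> n \<Longrightarrow> U_n ord n \<subseteq> U_n ord m"
proof
  fix x assume mn: "m \<le> n" and x: "x \<in> U_n ord n"
  show "x \<in> U_n ord m"
  proof (cases "m = 0")
    case True thus ?thesis using Un_unit[OF x] by (simp add: U0_iff)
  next
    case False thus ?thesis using x mn by (auto simp: Un_iff intro: vge_mono)
  qed
qed

lemma Un_mult: "n > 0 \<Longrightarrow> x \<in> U_n ord n \<Longrightarrow> y \<in> U_n ord n \<Longrightarrow> x * y \<in> U_n ord n"
proof -
  assume n: "n > 0" and x: "x \<in> U_n ord n" and y: "y \<in> U_n ord n"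
  have a: "vge ord (x - 1) n" "vge ord (y - 1) n" using x y n by (auto simp: Un_iff)
  have "vge ord ((x - 1) * (y - 1)) (n + n)" using vge_mult[OF a] by simp
  hence "vge ord ((x - 1) * (y - 1)) n" by (rule vge_mono) simp
  hence v: "vge ord ((x - 1) + (y - 1) + (x - 1) * (y - 1)) n" using a by (intro vge_add)
  have eq: "x * y - 1 = (x - 1) + (y - 1) + (x - 1) * (y - 1)" by (simp add: algebra_simps)
  show ?thesis unfolding Un_iff[OF n] eq by (rule v)
qed

lemma Un_power: "n > 0 \<Longrightarrow> x \<in> U_n ord n \<Longrightarrow> x ^ k \<in> U_n ord n"
proof (induction k)
  case 0 thus ?case by (simp add: Un_iff)
next
  case (Suc k) thus ?case using Un_mult[of n x "x ^ k"] by simp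
qed

lemma conductor_exists: assumes qc: "quasi_char ord q chi" shows "\<exists>n. \<forall>x \<in> U_n ord n. chi x = 1"
proof -
  have "\<exists>d>0. \<forall>y. y \<noteq> 0 \<longrightarrow> absv ord q (y - 1) < d \<longrightarrow> cmod (chi y - chi 1) < 1/2"
    using qc unfolding quasi_char_def by (metis half_gt_zero zero_less_one one_neq_zero)
  then obtain d where d: "d > 0" "\<And>y. y \<noteq> 0 \<Longrightarrow> absv ord q (y - 1) < d \<Longrightarrow> cmod (chi y - 1) < 1/2"
    using qc_1[OF qc] by auto
  have q: "real q \<ge> 2" using q_ge2 by simp
  obtain n0 where n0: "(1 / real q) ^ n0 < d" using real_arch_pow_inv[OF d(1), of "1 / real q"] q by auto
  define n where "n = Suc n0"
  have nd: "(1 / real q) ^ n < d"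
  proof -
    have "(1 / real q) ^ n \<le> (1 / real q) ^ n0" unfolding n_def using q by (intro power_decreasing) auto
    thus ?thesis using n0 by simp
  qed
  have "chi x = 1" if x: "x \<in> U_n ord n" for x
  proof -
    have npos: "n > 0" by (simp add: n_def)
    have "cmod (chi x ^ k - 1) < 1/2" for k
    proof -
      have xk: "x ^ k \<in> U_n ord n" by (rule Un_power[OF npos x])
      hence nz: "x ^ k \<noteq> 0" using Un_unit by blast
      have "absv ord q (x ^ k - 1) < d"
      proof (cases "x ^ k = 1")
        case True thus ?thesis using d by (simp add: absv_def)
      next
        case False
        hence o: "ord (x ^ k - 1) \<ge> int n" using xk npos by (simp add: Un_iff vge_def)
        have "absv ord q (x ^ k - 1) = real q powr (- real_of_int (ord (x ^ k - 1)))"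
          using False by (simp add: absv_def)
        also have "\<dots> \<le> real q powr (- real n)" using o q by (intro powr_mono) auto
        also have "\<dots> = (1 / real q) ^ n" using q by (simp add: powr_minus powr_realpow divide_inverse power_inverse)
        finally show ?thesis using nd by simp
      qed
      hence "cmod (chi (x ^ k) - 1) < 1/2" using d(2) nz by blast
      thus ?thesis using qc_power[OF qc] Un_unit[OF x] by simp
    qed
    thus ?thesis by (rule nss)
  qed
  thus ?thesis by blast
qed

lemma cond_prop: "quasi_char ord q chi \<Longrightarrow> x \<in> U_n ord (conductor_exp ord chi) \<Longrightarrow> chi x = 1"
  unfolding conductor_exp_def using LeastI_ex[OF conductor_exists] by blast

lemma cond_min: "m < conductor_exp ord chi \<Longrightarrow> \<exists>x \<in> U_n ord m. chi x \<noteq> 1"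
  unfolding conductor_exp_def using not_less_Least by blast

lemma cond0_iff: "quasi_char ord q chi \<Longrightarrow> conductor_exp ord chi = 0 \<longleftrightarrow> (\<forall>x. x \<noteq> 0 \<and> ord x = 0 \<longrightarrow> chi x = 1)"
proof
  assume "quasi_char ord q chi" "conductor_exp ord chi = 0"
  thus "\<forall>x. x \<noteq> 0 \<and> ord x = 0 \<longrightarrow> chi x = 1" using cond_prop[of chi] by (auto simp: U0_iff)
next
  assume "\<forall>x. x \<noteq> 0 \<and> ord x = 0 \<longrightarrow> chi x = 1"
  thus "conductor_exp ord chi = 0" unfolding conductor_exp_def by (intro Least_eq_0) (auto simp: U0_iff)
qed

lemma qc_unram: assumes "quasi_char ord q chi" "conductor_exp ord chi = 0" "x \<noteq> 0"
  shows "chi x = chi w powi ord x"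
proof -
  define u where "u = x / w powi ord x"
  have x: "x = w powi ord x * u" using w_nz by (simp add: u_def)
  have "u \<noteq> 0" "ord u = 0" using assms(3) w_nz by (simp_all add: u_def ord_divide)
  hence "chi u = 1" using cond0_iff[OF assms(1)] assms(2) by blast
  hence "chi x = chi (w powi ord x)" using qc_mult[OF assms(1), of "w powi ord x" u] x \<open>u \<noteq> 0\<close> w_nz
    by simp
  thus ?thesis using qc_powi[OF assms(1) w_nz] by simp
qed

end

locale prob = lfm +
  fixes psi chi :: "'a \<Rightarrow> complex" and beta :: complex
  assumes hpsi: "add_char ord psi" and hchi: "quasi_char ord q chi"
begin

definition S :: "int \<Rightarrow> 'a set" where "S k = {x. x \<noteq> 0 \<and> ord x = k}"
definition phi where "phi x = chi x * psi x * beta powi ord x"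
definition g where "g k x = indicator (S k) x *\<^sub>R phi x"
abbreviation "f \<equiv> conductor_exp ord chi"

lemma psi_add: "psi (x + y) = psi x * psi y" using hpsi by (simp add: add_char_def)
lemma psi_O: "vge ord x 0 \<Longrightarrow> psi x = 1" using hpsi by (simp add: add_char_def ball_v_iff)
lemma psi_nontriv: "\<exists>y. vge ord y (-1) \<and> psi y \<noteq> 1" using hpsi by (auto simp: add_char_def ball_v_iff)
lemma psi_nz: "psi x \<noteq> 0" using hpsi by (simp add: add_char_def)

lemma S_ball: "x \<in> S k \<Longrightarrow> x \<in> ball_v ord 0 k" by (simp add: S_def ball_v_iff vge_def)

lemma shell_shift: assumes x: "x \<in> S k" and y: "vge ord y m" and m: "m \<ge> k + 1" "m \<ge> k + int f"
  shows "x + y \<in> S k \<and> chi (x + y) = chi x"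
proof (cases "y = 0")
  case False
  have x0: "x \<noteq> 0" "ord x = k" using x by (auto simp: S_def)
  have oy: "ord y \<ge> m" using y False by (simp add: vge_def)
  hence lt: "ord x < ord y" using m x0 by simp
  note st = ord_strict[OF x0(1) False lt]
  have yx0: "y / x \<noteq> 0" using False x0 by simp
  have oyx: "ord (y / x) \<ge> m - k" using oy x0 False by (simp add: ord_divide)
  have eq: "x + y = x * (1 + y / x)" using x0 by (simp add: field_simps)
  have u: "1 + y / x \<in> U_n ord f"
  proof (cases "f = 0")
    case True
    have "ord 1 < ord (y / x)" using oyx m by simp
    from ord_strict[OF _ yx0 this] show ?thesis using True by (simp add: U0_iff)
  next
    case False
    have "vge ord (y / x) (int f)" using oyx m by (simp add: vge_def)
    thus ?thesis using False by (simp add: Un_iff)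
  qed
  have "chi (1 + y / x) = 1" by (rule cond_prop[OF hchi u])
  moreover have "1 + y / x \<noteq> 0" using Un_unit[OF u] by simp
  ultimately have "chi (x + y) = chi x" using eq qc_mult[OF hchi x0(1)] by simp
  thus ?thesis using st x0 by (simp add: S_def)
qed (use x in simp)

lemma shell_shift_rev: assumes "x \<notin> S k" "vge ord y m" "m \<ge> k + 1" "m \<ge> k + int f"
  shows "x + y \<notin> S k"
  using shell_shift[of "x + y" k "- y" m] assms by auto

definition N0 where "N0 k = max (k + 1) (max 0 (k + int f))"

lemma g_per: "per (N0 k) (g k)"
  unfolding per_def
proof (intro allI impI)
  fix x y assume y: "vge ord y (N0 k)"
  have m: "N0 k \<ge> k + 1" "N0 k \<ge> k + int f" "N0 k \<ge> 0" by (auto simp: N0_def)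
  show "g k (x + y) = g k x"
  proof (cases "x \<in> S k")
    case True
    note sh = shell_shift[OF True y m(1,2)]
    have "psi y = 1" using psi_O vge_mono[OF y m(3)] by blast
    moreover have "ord (x + y) = ord x" using sh True by (simp add: S_def)
    ultimately show ?thesis using sh True by (simp add: g_def phi_def psi_add)
  next
    case False
    thus ?thesis using shell_shift_rev[OF False y m(1,2)] by (simp add: g_def)
  qed
qed

lemma g_supp: "x \<notin> ball_v ord 0 k \<Longrightarrow> g k x = 0"
  using S_ball by (auto simp: g_def indicator_def)

lemma N0_ge: "k \<le> N0 k" by (simp add: N0_def)

lemma g_integrable: "integrable M (g k)"
  using L2(1)[of 1 k "N0 k" 0 "g k"] g_supp g_per N0_ge by simp

lemma g_transl: "integral\<^sup>L M (\<lambda>x. g k (x + t)) = integral\<^sup>L M (g k)"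
  using L2(3)[of 1 k "N0 k" 0 "g k" t] g_supp g_per N0_ge by simp

lemma g_unit: "u \<noteq> 0 \<Longrightarrow> ord u = 0 \<Longrightarrow> integral\<^sup>L M (\<lambda>x. g k (u * x)) = integral\<^sup>L M (g k)"
  using L2(3)[of u k "N0 k" 0 "g k" 0] g_supp g_per N0_ge by simp

lemma g_vanish_low: assumes "f > 0" "k < - int f" shows "integral\<^sup>L M (g k) = 0"
proof -
  obtain y where y: "vge ord y (-1)" "psi y \<noteq> 1" using psi_nontriv by blast
  have m: "-1 \<ge> k + 1" "-1 \<ge> k + int f" using assms by auto
  have "g k (x + y) = psi y * g k x" for x
  proof (cases "x \<in> S k")
    case True
    note sh = shell_shift[OF True y(1) m]
    have "ord (x + y) = ord x" using sh True by (simp add: S_def)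
    thus ?thesis using sh True by (simp add: g_def phi_def psi_add)
  next
    case False
    thus ?thesis using shell_shift_rev[OF False y(1) m] by (simp add: g_def)
  qed
  hence "integral\<^sup>L M (g k) = psi y * integral\<^sup>L M (g k)" using g_transl[of k y] by simp
  thus ?thesis using y(2) by (metis mult_cancel_right2)
qed

lemma g_vanish_high: assumes "k > - int f" "f > 0" shows "integral\<^sup>L M (g k) = 0"
proof -
  define m where "m = nat (- k)"
  have "m < f" using assms by (cases "k \<ge> 0") (auto simp: m_def nat_less_iff)
  then obtain u where u: "u \<in> U_n ord m" "chi u \<noteq> 1" using cond_min by blast
  have u0: "u \<noteq> 0" "ord u = 0" using Un_unit[OF u(1)] by auto
  have vu: "vge ord (u - 1) (- k)"
  proof (cases "m = 0")
    case True
    have "vge ord (u - 1) 0" using u0 by (intro vge_diff) (auto simp: vge_def)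
    thus ?thesis using True by (auto simp: m_def intro: vge_mono)
  next
    case False thus ?thesis using u(1) by (simp add: Un_iff m_def)
  qed
  have "g k (u * x) = chi u * g k x" for x
  proof (cases "x \<in> S k")
    case True
    hence x0: "x \<noteq> 0" "ord x = k" by (auto simp: S_def)
    have ux: "u * x \<in> S k" "ord (u * x) = k" using x0 u0 by (auto simp: S_def ord_mult)
    have "vge ord (x * (u - 1)) (k + - k)" using x0 vu by (intro vge_mult) (auto simp: vge_def)
    hence "psi (x * (u - 1)) = 1" by (intro psi_O) simp
    moreover have "u * x = x + x * (u - 1)" by (simp add: algebra_simps)
    ultimately have "psi (u * x) = psi x" by (simp add: psi_add)
    thus ?thesis using True ux x0 u0 qc_mult[OF hchi u0(1) x0(1)] by (simp add: g_def phi_def)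
  next
    case False
    hence "u * x \<notin> S k" using u0 by (auto simp: S_def ord_mult)
    thus ?thesis using False by (simp add: g_def)
  qed
  hence "integral\<^sup>L M (g k) = chi u * integral\<^sup>L M (g k)" using g_unit[OF u0, of k] by simp
  thus ?thesis using u(2) by (metis mult_cancel_right2)
qed

end

context prob begin

definition Q where "Q k = integral\<^sup>L M (\<lambda>x. indicator (ball_v ord 0 k) x *\<^sub>R psi x)"

lemma hb_per: "per (max k 0) (\<lambda>x. indicator (ball_v ord 0 k) x *\<^sub>R psi x)"
  unfolding per_def
proof (intro allI impI)
  fix x y assume y: "vge ord y (max k 0)"
  have "x + y \<in> ball_v ord 0 k \<longleftrightarrow> x \<in> ball_v ord 0 k"
    using vge_add[of x k y] vge_add[of "x + y" k "- y"] vge_mono[OF y, of k] by (auto simp: ball_v_iff)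
  moreover have "psi y = 1" using psi_O vge_mono[OF y, of 0] by simp
  ultimately show "indicator (ball_v ord 0 k) (x + y) *\<^sub>R psi (x + y) = indicator (ball_v ord 0 k) x *\<^sub>R psi x"
    by (simp add: psi_add indicator_def)
qed

lemma hb_int: "integrable M (\<lambda>x. indicator (ball_v ord 0 k) x *\<^sub>R psi x)"
  using L2(1)[of 1 k "max k 0" 0, OF _ _ _ _ hb_per] by simp

lemma Q_pos: "k \<ge> 0 \<Longrightarrow> Q k = of_real (real q powr (- of_int k))"
proof -
  assume k: "k \<ge> 0"
  have "(\<lambda>x. indicator (ball_v ord 0 k) x *\<^sub>R psi x) = (\<lambda>x. indicator (ball_v ord 0 k) x *\<^sub>R (1::complex))"
    by (rule ext) (use psi_O vge_mono[of _ k 0] k in \<open>auto simp: indicator_def ball_v_iff\<close>)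
  hence "Q k = integral\<^sup>L M (\<lambda>x. indicator (ball_v ord 0 k) x *\<^sub>R (1::complex))" by (simp add: Q_def)
  thus ?thesis by (simp add: integral_ind_ball measure_ball scaleR_conv_of_real)
qed

lemma Q_neg: "k \<le> -1 \<Longrightarrow> Q k = 0"
proof -
  assume k: "k \<le> -1"
  obtain y where y: "vge ord y (-1)" "psi y \<noteq> 1" using psi_nontriv by blast
  define hb where "hb x = indicator (ball_v ord 0 k) x *\<^sub>R psi x" for x
  have fe: "hb (1 * x + y) = psi y * hb x" for x
  proof -
    have "x + y \<in> ball_v ord 0 k \<longleftrightarrow> x \<in> ball_v ord 0 k"
      using vge_add[of x k y] vge_add[of "x + y" k "- y"] vge_mono[OF y(1), of k] k by (auto simp: ball_v_iff)
    thus ?thesis by (simp add: psi_add indicator_def hb_def)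
  qed
  have e: "integral\<^sup>L M (\<lambda>x. hb (1 * x + y)) = integral\<^sup>L M hb"
    unfolding hb_def by (rule L2(3)[of 1 k "max k 0" 0, OF _ _ _ _ hb_per]) auto
  have "integral\<^sup>L M (\<lambda>x. psi y * hb x) = integral\<^sup>L M hb" using e unfolding fe .
  moreover have "integral\<^sup>L M (\<lambda>x. psi y * hb x) = psi y * integral\<^sup>L M hb" by (rule integral_mult_right_zero)
  moreover have "Q k = integral\<^sup>L M hb" unfolding Q_def hb_def by (rule refl)
  ultimately have "Q k = psi y * Q k" by simp
  thus ?thesis using y(2) by (metis mult_cancel_right2)
qed

lemma g_unram: assumes f0: "f = 0"
  shows "g k x = (chi w * beta) powi k * (indicator (ball_v ord 0 k) x *\<^sub>R psi x - indicator (ball_v ord 0 (k + 1)) x *\<^sub>R psi x)"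
proof (cases "x \<in> S k")
  case True
  hence x: "x \<noteq> 0" "ord x = k" by (auto simp: S_def)
  have "chi x = chi w powi k" using qc_unram[OF hchi f0 x(1)] x by simp
  thus ?thesis using x True by (simp add: g_def phi_def ball_v_iff vge_def power_int_mult_distrib)
next
  case False
  hence "x \<in> ball_v ord 0 k \<longleftrightarrow> x \<in> ball_v ord 0 (k + 1)" by (auto simp: S_def ball_v_iff vge_def)
  thus ?thesis using False by (simp add: g_def indicator_def)
qed

lemma int_g_unram: "f = 0 \<Longrightarrow> integral\<^sup>L M (g k) = (chi w * beta) powi k * (Q k - Q (k + 1))"
proof -
  assume f0: "f = 0"
  have "g k = (\<lambda>x. (chi w * beta) powi k * (indicator (ball_v ord 0 k) x *\<^sub>R psi x - indicator (ball_v ord 0 (k + 1)) x *\<^sub>R psi x))"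
    by (rule ext) (rule g_unram[OF f0])
  thus ?thesis by (simp add: Q_def hb_int)
qed

end

context prob begin

definition Ann :: "nat \<Rightarrow> 'a set" where "Ann n = {x. x \<noteq> 0 \<and> - int n \<le> ord x \<and> ord x \<le> int n}"

lemma ann_sum: "indicator (Ann n) x *\<^sub>R phi x = (\<Sum>k\<in>{- int n..int n}. g k x)"
proof -
  have "g k x = (if k = ord x then (if x \<noteq> 0 then phi x else 0) else 0)" for k
    by (auto simp: g_def S_def indicator_def)
  hence "(\<Sum>k\<in>{- int n..int n}. g k x) = (if ord x \<in> {- int n..int n} then (if x \<noteq> 0 then phi x else 0) else 0)"
    by (simp add: sum.delta')
  thus ?thesis by (auto simp: Ann_def indicator_def)
qed

lemma ann_fun: "(\<lambda>x. indicator (Ann n) x *\<^sub>R phi x) = (\<lambda>x. \<Sum>k\<in>{- int n..int n}. g k x)"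
  by (rule ext) (rule ann_sum)

lemma ann_integrable: "set_integrable M (Ann n) phi"
  unfolding set_integrable_def ann_fun
  by (rule Bochner_Integration.integrable_sum) (rule g_integrable)

lemma ann_integral: "set_lebesgue_integral M (Ann n) phi = (\<Sum>k\<in>{- int n..int n}. integral\<^sup>L M (g k))"
  unfolding set_lebesgue_integral_def ann_fun
  by (rule Bochner_Integration.integral_sum) (rule g_integrable)

lemma ann_ram: assumes "f > 0" "n \<ge> f"
  shows "set_lebesgue_integral M (Ann n) phi = integral\<^sup>L M (g (- int f))"
proof -
  have mem: "- int f \<in> {- int n..int n}" using assms by auto
  have "(\<Sum>k\<in>{- int n..int n}. integral\<^sup>L M (g k)) = integral\<^sup>L M (g (- int f)) + (\<Sum>k\<in>{- int n..int n} - {- int f}. integral\<^sup>L M (g k))"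
    by (rule sum.remove[OF _ mem]) simp
  also have "(\<Sum>k\<in>{- int n..int n} - {- int f}. integral\<^sup>L M (g k)) = 0"
  proof (rule sum.neutral, rule ballI)
    fix k assume "k \<in> {- int n..int n} - {- int f}"
    hence "k < - int f \<or> k > - int f" by auto
    thus "integral\<^sup>L M (g k) = 0" using g_vanish_low g_vanish_high assms(1) by blast
  qed
  finally show ?thesis using ann_integral by simp
qed

definition T where "T k = (chi w * beta) powi k * (Q k - Q (k + 1))"

lemma T_low: "k \<le> -2 \<Longrightarrow> T k = 0" by (simp add: T_def Q_neg)
lemma T_m1: "T (-1) = - inverse (chi w * beta)" using q_ge2 by (simp add: T_def Q_neg Q_pos power_int_minus)

lemma qpow: "real q powr (- real k) = (1 / real q) ^ k"
  using q_ge2 by (simp add: powr_minus powr_realpow power_one_over inverse_eq_divide)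
lemma T_nat: "T (int j) = (chi w * beta / of_nat q) ^ j * (1 - 1 / of_nat q)"
proof -
  have q: "real q > 0" using q_ge2 by simp
  have "Q (int j) = of_real ((1 / real q) ^ j)" using Q_pos[of "int j"] qpow[of j] by simp
  moreover have "Q (int j + 1) = of_real ((1 / real q) ^ Suc j)" using Q_pos[of "int (Suc j)"] qpow[of "Suc j"] by (simp add: add.commute)
  ultimately have "Q (int j) - Q (int j + 1) = (1 / of_nat q) ^ j * (1 - 1 / of_nat q)"
    by (simp add: algebra_simps)
  thus ?thesis by (simp add: T_def power_divide)
qed

lemma sum_T: "n \<ge> 1 \<Longrightarrow> (\<Sum>k\<in>{- int n..int n}. T k) = T (-1) + (\<Sum>j\<in>{0..n}. T (int j))"
proof -
  assume n: "n \<ge> 1"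
  have "(\<Sum>k\<in>{- int n..int n}. T k) = (\<Sum>k\<in>{-1..int n}. T k)"
    by (rule sum.mono_neutral_right) (use n T_low in auto)
  also have "{-1..int n} = insert (-1) {0..int n}" by auto
  also have "(\<Sum>k\<in>insert (-1) {0..int n}. T k) = T (-1) + (\<Sum>k\<in>{0..int n}. T k)" by simp
  also have "{0..int n} = int ` {0..n}"
  proof (rule set_eqI)
    fix k show "k \<in> {0..int n} \<longleftrightarrow> k \<in> int ` {0..n}"
      by (auto simp: image_iff intro!: bexI[of _ "nat k"])
  qed
  also have "(\<Sum>k\<in>int ` {0..n}. T k) = (\<Sum>j\<in>{0..n}. T (int j))" by (simp add: sum.reindex)
  finally show ?thesis .
qed

lemma unram_limit: assumes f0: "f = 0" and small: "cmod (chi w * beta / of_nat q) < 1"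
  shows "(\<lambda>n. set_lebesgue_integral M (Ann n) phi) \<longlonglongrightarrow>
     - inverse (chi w * beta) + (1 - 1 / of_nat q) / (1 - chi w * beta / of_nat q)"
proof -
  define r where "r = chi w * beta / of_nat q"
  have "(\<lambda>j. r ^ j * (1 - 1 / of_nat q)) sums (1 / (1 - r) * (1 - 1 / of_nat q))"
    by (rule sums_mult2, rule geometric_sums) (use small r_def in simp)
  hence L: "(\<lambda>n. \<Sum>j\<in>{0..n}. T (int j)) \<longlonglongrightarrow> (1 - 1 / of_nat q) / (1 - r)"
    unfolding sums_def' T_nat r_def by simp
  have ev: "eventually (\<lambda>n. T (-1) + (\<Sum>j\<in>{0..n}. T (int j)) = set_lebesgue_integral M (Ann n) phi) sequentially"
    using eventually_ge_at_top[of 1]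
  proof (rule eventually_mono)
    fix n :: nat assume "n \<ge> 1"
    thus "T (-1) + (\<Sum>j\<in>{0..n}. T (int j)) = set_lebesgue_integral M (Ann n) phi"
      using sum_T ann_integral int_g_unram[OF f0] by (simp add: T_def)
  qed
  have "(\<lambda>n. T (-1) + (\<Sum>j\<in>{0..n}. T (int j))) \<longlonglongrightarrow> T (-1) + (1 - 1 / of_nat q) / (1 - r)"
    by (intro tendsto_add tendsto_const L)
  from Lim_transform_eventually[OF this ev] show ?thesis by (simp add: T_m1 r_def)
qed

end

context lf begin
lemma finite_cover: "n \<le> N \<Longrightarrow> \<exists>C. finite C \<and> ball_v ord a n \<subseteq> (\<Union>c\<in>C. ball_v ord c N)"
proof (induction "nat (N - n)" arbitrary: a n)
  case 0 thus ?case by (intro exI[of _ "{a}"]) auto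
next
  case (Suc d)
  have "\<exists>C. finite C \<and> ball_v ord (a + w powi n * r) (n + 1) \<subseteq> (\<Union>c\<in>C. ball_v ord c N)" for r
    using Suc by (intro Suc.hyps) auto
  then obtain C where C: "\<And>r. finite (C r) \<and> ball_v ord (a + w powi n * r) (n + 1) \<subseteq> (\<Union>c\<in>C r. ball_v ord c N)"
    by metis
  show ?case
  proof (intro exI conjI)
    show "finite (\<Union>r\<in>Rs. C r)" using C Rs(1) by auto
    show "ball_v ord a n \<subseteq> (\<Union>c\<in>(\<Union>r\<in>Rs. C r). ball_v ord c N)"
      by (subst decomp_cover) (use C in blast)
  qed
qed

lemma S0_eq: "U_n ord 0 = ball_v ord 0 0 - ball_v ord 0 1"
  by (auto simp: U0_iff ball_v_iff vge_def)
end

context lfm begin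

lemma S0_sets: "U_n ord 0 \<in> sets M" by (simp add: S0_eq)

lemma measure_S0: "measure M (U_n ord 0) = 1 - 1 / real q"
proof -
  have "measure M (U_n ord 0) = measure M (ball_v ord 0 0) - measure M (ball_v ord 0 1)"
    unfolding S0_eq by (rule measure_Diff) (auto simp: emeasure_ball ball_subset)
  thus ?thesis using q_ge2 by (simp add: measure_ball powr_minus inverse_eq_divide)
qed

lemma emeasure_S0_fin: "emeasure M (U_n ord 0) < \<infinity>"
proof -
  have "emeasure M (U_n ord 0) \<le> emeasure M (ball_v ord 0 0)" unfolding S0_eq by (intro emeasure_mono) auto
  thus ?thesis using emeasure_ball_fin[of 0 0] by order
qed

lemma int_S0_const: "integral\<^sup>L M (\<lambda>x. indicator (U_n ord 0) x *\<^sub>R (c::complex)) = (1 - 1 / real q) *\<^sub>R c"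
  using S0_sets emeasure_S0_fin measure_S0 by (subst integral_scaleR_left) auto

lemma gauss0: assumes c0: "conductor_exp ord chi = 0" and u1: "\<And>x. x \<noteq> 0 \<Longrightarrow> ord x = 0 \<Longrightarrow> chi x = 1"
   and ps: "\<And>x. vge ord x 0 \<Longrightarrow> psi x = 1"
  shows "gauss_sum ord w q M psi chi = 1"
proof -
  let ?U = "U_n ord 0"
  have im: "(\<lambda>u. (\<lambda>y. u * y) ` ?U) ` ?U = {?U}"
  proof -
    have "(\<lambda>y. u * y) ` ?U = ?U" if u: "u \<in> ?U" for u
    proof (rule set_eqI)
      fix x
      have u0: "u \<noteq> 0" "ord u = 0" using u by (auto simp: U0_iff)
      show "x \<in> (\<lambda>y. u * y) ` ?U \<longleftrightarrow> x \<in> ?U"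
      proof
        assume "x \<in> ?U" hence "x / u \<in> ?U" using u0 by (auto simp: U0_iff ord_divide)
        moreover have "x = u * (x / u)" using u0 by simp
        ultimately show "x \<in> (\<lambda>y. u * y) ` ?U" by blast
      qed (use u0 in \<open>auto simp: U0_iff ord_mult\<close>)
    qed
    moreover have "1 \<in> ?U" by (simp add: U0_iff)
    ultimately show ?thesis by auto
  qed
  have im2: "(\<lambda>u. w powi (- int 0) * u) ` ?U = ?U" by simp
  have fe: "(\<lambda>x. indicator ?U x *\<^sub>R (complex_of_real (real q / (real q - 1) / absv ord q x) * psi x * chi x))
      = (\<lambda>x. indicator ?U x *\<^sub>R complex_of_real (real q / (real q - 1)))"
  proof (rule ext)
    fix x show "indicator ?U x *\<^sub>R (complex_of_real (real q / (real q - 1) / absv ord q x) * psi x * chi x)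
      = indicator ?U x *\<^sub>R complex_of_real (real q / (real q - 1))"
      using u1[of x] ps[of x] q_ge2 by (auto simp: indicator_def U0_iff absv_def vge_def)
  qed
  have q: "real q \<ge> 2" using q_ge2 by simp
  have "(1 - 1 / real q) * (real q / (real q - 1)) = 1" using q by (simp add: field_simps)
  hence "(1 - 1 / real q) *\<^sub>R complex_of_real (real q / (real q - 1)) = 1"
    by (metis of_real_1 of_real_mult scaleR_conv_of_real)
  thus ?thesis unfolding gauss_sum_def Let_def c0 im im2 set_lebesgue_integral_def fe int_S0_const
    by simp
qed

end

context lfm begin

lemma coset_ball: assumes m: "m > 0" and u: "u \<in> U_n ord 0"
  shows "(\<lambda>y. u * y) ` U_n ord m = ball_v ord u (int m)"
proof (rule set_eqI)
  fix x
  have u0: "u \<noteq> 0" "ord u = 0" using u by (auto simp: U0_iff)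
  have iu: "inverse u \<noteq> 0" "ord (inverse u) = 0" using u0 by (auto simp: ord_inverse)
  show "x \<in> (\<lambda>y. u * y) ` U_n ord m \<longleftrightarrow> x \<in> ball_v ord u (int m)"
  proof
    assume "x \<in> (\<lambda>y. u * y) ` U_n ord m"
    then obtain y where y: "y \<in> U_n ord m" "x = u * y" by blast
    have "vge ord (u * (y - 1)) m" using y(1) m vge_unit_mult[OF u0] by (simp add: Un_iff)
    thus "x \<in> ball_v ord u (int m)" using y(2) by (simp add: ball_v_iff algebra_simps)
  next
    assume "x \<in> ball_v ord u (int m)"
    hence "vge ord (inverse u * (x - u)) m" using vge_unit_mult[OF iu] by (simp add: ball_v_iff)
    moreover have "inverse u * (x - u) = x / u - 1" using u0 by (simp add: field_simps)
    ultimately have "x / u \<in> U_n ord m" using m by (simp add: Un_iff)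
    moreover have "x = u * (x / u)" using u0 by simp
    ultimately show "x \<in> (\<lambda>y. u * y) ` U_n ord m" by blast
  qed
qed

lemma card_cosets: assumes m: "m > 0"
  shows "real (card ((\<lambda>u. (\<lambda>y. u * y) ` U_n ord m) ` U_n ord 0)) = (1 - 1 / real q) * real q powr real m"
proof -
  let ?U = "U_n ord 0"
  define C where "C = (\<lambda>u. ball_v ord u (int m)) ` ?U"
  have CC: "(\<lambda>u. (\<lambda>y. u * y) ` U_n ord m) ` ?U = C"
    unfolding C_def using coset_ball[OF m] by (intro image_cong) auto
  obtain Cs where Cs: "finite Cs" "ball_v ord 0 0 \<subseteq> (\<Union>c\<in>Cs. ball_v ord c (int m))"
    using finite_cover[of 0 "int m" 0] by auto
  have "C \<subseteq> (\<lambda>c. ball_v ord c (int m)) ` Cs"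
  proof
    fix B assume "B \<in> C"
    then obtain u where u: "u \<in> ?U" "B = ball_v ord u (int m)" by (auto simp: C_def)
    have "u \<in> ball_v ord 0 0" using u(1) by (simp add: S0_eq)
    then obtain c where c: "c \<in> Cs" "u \<in> ball_v ord c (int m)" using Cs(2) by blast
    thus "B \<in> (\<lambda>c. ball_v ord c (int m)) ` Cs" using ball_eq[OF c(2)] u(2) by blast
  qed
  hence fin: "finite C" using Cs(1) finite_subset by blast
  have disj: "disjoint_family_on id C"
    unfolding disjoint_family_on_def
  proof (intro ballI impI)
    fix B1 B2 assume b: "B1 \<in> C" "B2 \<in> C" "B1 \<noteq> B2"
    obtain u1 u2 where u: "B1 = ball_v ord u1 (int m)" "B2 = ball_v ord u2 (int m)" using b(1,2) by (auto simp: C_def)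
    show "id B1 \<inter> id B2 = {}"
    proof (rule ccontr)
      assume "id B1 \<inter> id B2 \<noteq> {}"
      then obtain x where "x \<in> B1" "x \<in> B2" by auto
      hence "B1 = B2" unfolding u by (rule ball_inter)
      thus False using b(3) by simp
    qed
  qed
  have un: "(\<Union>B\<in>C. id B) = ?U"
  proof (rule set_eqI)
    fix x show "x \<in> (\<Union>B\<in>C. id B) \<longleftrightarrow> x \<in> ?U"
    proof
      assume "x \<in> (\<Union>B\<in>C. id B)"
      then obtain u where u: "u \<in> ?U" "x \<in> ball_v ord u (int m)" by (auto simp: C_def)
      have u0: "u \<noteq> 0" "ord u = 0" using u by (auto simp: U0_iff)
      show "x \<in> ?U"
      proof (cases "x = u")
        case False
        hence o: "ord (x - u) \<ge> int m" using u(2) by (simp add: ball_v_iff vge_def)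
        have "x - u \<noteq> 0" using False by simp
        moreover have "ord u < ord (x - u)" using o u0 m by simp
        ultimately have "u + (x - u) \<noteq> 0 \<and> ord (u + (x - u)) = ord u" using ord_strict[OF u0(1)] by blast
        thus ?thesis using u0 by (simp add: U0_iff)
      qed (use u in simp)
    next
      assume "x \<in> ?U" thus "x \<in> (\<Union>B\<in>C. id B)" unfolding C_def using ball_mem_center by fastforce
    qed
  qed
  have "measure M (\<Union>B\<in>C. id B) = (\<Sum>B\<in>C. measure M (id B))"
    by (rule measure_finite_Union[OF fin _ disj]) (auto simp: C_def emeasure_ball)
  also have "\<dots> = (\<Sum>B\<in>C. real q powr (- real m))"
    by (intro sum.cong refl) (auto simp: C_def measure_ball)
  finally have "1 - 1 / real q = real (card C) * real q powr (- real m)" using un measure_S0 by simp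
  hence "real (card C) = (1 - 1 / real q) * real q powr real m"
    using q_ge2 by (simp add: powr_minus field_simps)
  thus ?thesis using CC by simp
qed

end

context prob begin

definition J where "J = integral\<^sup>L M (\<lambda>x. indicator (S (- int f)) x *\<^sub>R (chi x * psi x))"

lemma int_g_ram: "integral\<^sup>L M (g (- int f)) = beta powi (- int f) * J"
proof -
  have "g (- int f) = (\<lambda>x. beta powi (- int f) * (indicator (S (- int f)) x *\<^sub>R (chi x * psi x)))"
    by (rule ext) (auto simp: g_def phi_def S_def indicator_def)
  show ?thesis unfolding J_def \<open>g (- int f) = _\<close> by (rule integral_mult_right_zero)
qed

lemma gauss_ram: assumes "f > 0" shows "gauss_sum ord w q M psi chi = J"
proof -
  have im: "(\<lambda>u. w powi (- int f) * u) ` U_n ord 0 = S (- int f)"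
  proof (rule set_eqI)
    fix x show "x \<in> (\<lambda>u. w powi (- int f) * u) ` U_n ord 0 \<longleftrightarrow> x \<in> S (- int f)"
    proof
      assume "x \<in> S (- int f)"
      hence x: "x \<noteq> 0" "ord x = - int f" by (auto simp: S_def)
      have "x / w powi (- int f) \<in> U_n ord 0" using x w_nz by (simp add: U0_iff ord_divide)
      moreover have "x = w powi (- int f) * (x / w powi (- int f))" using w_nz by simp
      ultimately show "x \<in> (\<lambda>u. w powi (- int f) * u) ` U_n ord 0" by blast
    qed (use w_nz in \<open>auto simp: U0_iff S_def ord_mult\<close>)
  qed
  define K where "K = real q / (real q - 1) * real q powr (- real f)"
  have fe: "(\<lambda>x. indicator (S (- int f)) x *\<^sub>R (complex_of_real (real q / (real q - 1) / absv ord q x) * psi x * chi x))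
     = (\<lambda>x. of_real K * (indicator (S (- int f)) x *\<^sub>R (chi x * psi x)))"
  proof (rule ext)
    fix x show "indicator (S (- int f)) x *\<^sub>R (complex_of_real (real q / (real q - 1) / absv ord q x) * psi x * chi x)
     = of_real K * (indicator (S (- int f)) x *\<^sub>R (chi x * psi x))"
    proof (cases "x \<in> S (- int f)")
      case True
      hence x: "x \<noteq> 0" "ord x = - int f" by (auto simp: S_def)
      have "absv ord q x = real q powr real f" using x by (simp add: absv_def)
      hence "real q / (real q - 1) / absv ord q x = K" by (simp add: K_def powr_minus divide_inverse)
      thus ?thesis using True by (simp add: mult.commute mult.left_commute)
    qed simp
  qed
  have "real (card ((\<lambda>u. (\<lambda>y. u * y) ` U_n ord f) ` U_n ord 0)) * K = 1"
    unfolding card_cosets[OF assms] K_def using q_ge2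
    by (simp add: field_simps powr_minus)
  hence "complex_of_nat (card ((\<lambda>u. (\<lambda>y. u * y) ` U_n ord f) ` U_n ord 0)) * of_real K = 1"
    by (metis of_real_1 of_real_mult of_real_of_nat_eq)
  hence "complex_of_nat (card ((\<lambda>u. (\<lambda>y. u * y) ` U_n ord f) ` U_n ord 0)) * (of_real K * J) = J"
    by (metis mult.assoc mult_1)
  moreover have eqJ: "integral\<^sup>L M (\<lambda>x. of_real K * (indicator (S (- int f)) x *\<^sub>R (chi x * psi x))) = of_real K * J"
    unfolding J_def by (rule integral_mult_right_zero)
  ultimately show ?thesis unfolding gauss_sum_def Let_def im set_lebesgue_integral_def fe eqJ
    by simp
qed

end


lemma alg_I: fixes a2 z qq :: complex
  assumes "qq \<noteq> 0" "a2 \<noteq> 0" "z \<noteq> 0" "z \<noteq> a2"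
  shows "- inverse (z * (qq / a2)) + (1 - 1 / qq) / (1 - z * (qq / a2) / qq) = (1 - a2 / z / qq) / (1 - z / a2)"
proof -
  have "1 - z / a2 \<noteq> 0" using assms by (simp add: field_simps)
  thus ?thesis using assms by (simp add: field_simps)
qed

lemma alg_spec0: fixes A B D :: complex assumes "A \<noteq> 0" shows "A * B / D * (1 / A) = B / D"
  using assms by (simp add: field_simps)
lemma alg_sph0: fixes A B C D :: complex assumes "A \<noteq> 0" "C \<noteq> 0" shows "A * B * C / D * (1 / A * (1 / C)) = B / D"
  using assms by (simp add: field_simps)

lemma L_GL1_unr: "(\<forall>x\<in>U_n ord 0. eta x = 1) \<Longrightarrow>
   L_GL1 ord w q eta (1/2) = 1 / (1 - eta w * complex_of_real (real q powr (- (1/2))))"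
  unfolding L_GL1_def conductor_exp_def by (subst Least_eq_0) auto

lemma L_GL1_ram: assumes "\<exists>n. \<forall>x\<in>U_n ord n. eta x = 1" "\<not> (\<forall>x\<in>U_n ord 0. eta x = 1)"
  shows "L_GL1 ord w q eta s = 1"
proof -
  have "conductor_exp ord eta \<noteq> 0"
  proof
    assume "conductor_exp ord eta = 0"
    moreover have "\<forall>x\<in>U_n ord (conductor_exp ord eta). eta x = 1"
      unfolding conductor_exp_def by (rule LeastI_ex[OF assms(1)])
    ultimately show False using assms(2) by simp
  qed
  thus ?thesis by (simp add: L_GL1_def)
qed

lemma sqrt_rel: "real q \<ge> 1 \<Longrightarrow> complex_of_real (real q powr (- (1/2))) = complex_of_real (sqrt (real q)) / of_nat q"
proof -
  assume q: "real q \<ge> 1"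
  have a: "real q powr (- (1/2)) = inverse (sqrt (real q))"
    using powr_minus[of "real q" "1/2"] powr_half_sqrt[of "real q"] by simp
  have s: "sqrt (real q) * sqrt (real q) = real q" by simp
  have b: "sqrt (real q) / real q = inverse (sqrt (real q))"
    using q by (subst s[symmetric]) (simp add: field_simps)
  have "complex_of_real (sqrt (real q)) / of_nat q = complex_of_real (sqrt (real q) / real q)" by simp
  thus ?thesis using a b by simp
qed

theorem proposition2p4:
  fixes ord :: "'a::field_char_0 \<Rightarrow> int" and w :: 'a and q :: nat and M :: "'a measure"
    and psi chi1 chi2 chi :: "'a \<Rightarrow> complex" and special :: bool
    and alpha1 alpha2 nu :: complex
  assumes F: "nonarch_local_field ord w q"
    and haar: "is_haar ord M"
    and hpsi: "add_char ord psi"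
    and hchi1: "quasi_char ord q chi1" "conductor_exp ord chi1 = 0"
    and hchi2: "quasi_char ord q chi2" "conductor_exp ord chi2 = 0"
    and spec: "special \<longrightarrow> (\<forall>x. x \<noteq> 0 \<longrightarrow> chi1 x = complex_of_real (absv ord q x) * chi2 x)"
    and sph: "\<not> special \<longrightarrow>
       (\<exists>x. x \<noteq> 0 \<and> chi1 x \<noteq> complex_of_real (absv ord q x) * chi2 x) \<and>
       (\<exists>x. x \<noteq> 0 \<and> chi2 x \<noteq> complex_of_real (absv ord q x) * chi1 x)"
    and a1: "alpha1 = chi1 w * complex_of_real (sqrt (real q))"
    and a2: "alpha2 = chi2 w * complex_of_real (sqrt (real q))"
    and nu: "nu = alpha1 * alpha2 / of_nat q"
    and hchi: "quasi_char ord q chi"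
    and unr: "conductor_exp ord chi = 0 \<longrightarrow> cmod (chi w) < cmod alpha2"
  shows
    "(\<forall>n::nat. set_integrable M {x. x \<noteq> 0 \<and> - int n \<le> ord x \<and> ord x \<le> int n}
        (\<lambda>x. chi x * psi x * (alpha1 / nu) powi ord x)) \<and>
     (\<exists>I. (\<lambda>n::nat. LINT x : {x. x \<noteq> 0 \<and> - int n \<le> ord x \<and> ord x \<le> int n} | M.
             chi x * psi x * (alpha1 / nu) powi ord x) \<longlonglongrightarrow> I \<and>
        (conductor_exp ord chi > 0 \<longrightarrow>
           I = e_fac special q alpha1 alpha2 (conductor_exp ord chi) (chi w) * gauss_sum ord w q M psi chi
               * L_pi ord w q special chi1 chi2 chi (1/2)) \<and>
        (conductor_exp ord chi = 0 \<longrightarrow>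
           (chi w \<noteq> of_nat q / alpha1 \<and> chi w \<noteq> of_nat q / alpha2 \<longrightarrow>
              I = e_fac special q alpha1 alpha2 0 (chi w) * gauss_sum ord w q M psi chi
                  * L_pi ord w q special chi1 chi2 chi (1/2)) \<and>
           ((\<lambda>z. e_fac special q alpha1 alpha2 0 z * gauss_sum ord w q M psi (\<lambda>x. z powi ord x)
                  * L_pi ord w q special chi1 chi2 (\<lambda>x. z powi ord x) (1/2)) \<longlongrightarrow> I) (at (chi w))))"
proof -
  interpret P: prob ord w q M psi chi "alpha1 / nu"
    by unfold_locales (rule F haar hpsi hchi)+
  have annE: "{x. x \<noteq> 0 \<and> - int n \<le> ord x \<and> ord x \<le> int n} = P.Ann n" for n
    by (simp add: P.Ann_def)
  have phE: "(\<lambda>x. chi x * psi x * (alpha1 / nu) powi ord x) = P.phi" by (rule ext) (simp add: P.phi_def)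
  have q2: "q \<ge> 2" by (rule P.q_ge2)
  have sq: "sqrt (real q) > 0" using q2 by simp
  have c1: "chi1 w \<noteq> 0" using P.qc_nz[OF hchi1(1) P.w_nz] .
  have c2: "chi2 w \<noteq> 0" using P.qc_nz[OF hchi2(1) P.w_nz] .
  have cw: "chi w \<noteq> 0" using P.qc_nz[OF hchi P.w_nz] .
  have al1: "alpha1 \<noteq> 0" using c1 sq a1 by simp
  have al2: "alpha2 \<noteq> 0" using c2 sq a2 by simp
  have qnz: "(of_nat q :: complex) \<noteq> 0" using q2 by simp
  have beta: "alpha1 / nu = of_nat q / alpha2" unfolding nu using al1 al2 qnz by (simp add: field_simps)
  have u1: "\<forall>x\<in>U_n ord 0. chi1 x = 1" using P.cond_prop[OF hchi1(1)] hchi1(2) by simp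
  have u2: "\<forall>x\<in>U_n ord 0. chi2 x = 1" using P.cond_prop[OF hchi2(1)] hchi2(2) by simp
  have s1: "chi1 w * complex_of_real (real q powr (- (1/2))) = alpha1 / of_nat q"
    using sqrt_rel[of q] q2 a1 by simp
  have s2: "chi2 w * complex_of_real (real q powr (- (1/2))) = alpha2 / of_nat q"
    using sqrt_rel[of q] q2 a2 by simp
  have part1: "\<forall>n::nat. set_integrable M {x. x \<noteq> 0 \<and> - int n \<le> ord x \<and> ord x \<le> int n}
        (\<lambda>x. chi x * psi x * (alpha1 / nu) powi ord x)"
    unfolding annE phE using P.ann_integrable by blast
  define s where "s = complex_of_real (real q powr (- (1/2)))"
  define G where "G z = (1 - alpha2 / z / of_nat q) / (1 - z / alpha2)" for z
  have s1': "chi1 w * z * s = alpha1 * z / of_nat q" for z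
  proof -
    have "chi1 w * z * s = (chi1 w * s) * z" by (simp add: algebra_simps)
    also have "\<dots> = alpha1 * z / of_nat q" using s1 by (simp add: s_def)
    finally show ?thesis .
  qed
  have s2': "chi2 w * z * s = alpha2 * z / of_nat q" for z
  proof -
    have "chi2 w * z * s = (chi2 w * s) * z" by (simp add: algebra_simps)
    also have "\<dots> = alpha2 * z / of_nat q" using s2 by (simp add: s_def)
    finally show ?thesis .
  qed
  have Lpi_unr: "L_pi ord w q special chi1 chi2 eta (1/2) =
     (if special then 1 / (1 - alpha1 * eta w / of_nat q)
      else 1 / (1 - alpha1 * eta w / of_nat q) * (1 / (1 - alpha2 * eta w / of_nat q)))"
    if e1: "\<forall>x\<in>U_n ord 0. eta x = 1" for eta
  proof -
    have "\<forall>x\<in>U_n ord 0. chi1 x * eta x = 1" "\<forall>x\<in>U_n ord 0. chi2 x * eta x = 1" using e1 u1 u2 by auto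
    from L_GL1_unr[OF this(1)] L_GL1_unr[OF this(2)]
    show ?thesis unfolding L_pi_def using s1'[of "eta w"] s2'[of "eta w"] by (simp add: s_def)
  qed
  have Fz: "e_fac special q alpha1 alpha2 0 z * 1 *
     (if special then 1 / (1 - alpha1 * z / of_nat q)
      else 1 / (1 - alpha1 * z / of_nat q) * (1 / (1 - alpha2 * z / of_nat q))) = G z"
    if "1 - alpha1 * z / of_nat q \<noteq> 0" "1 - alpha2 * z / of_nat q \<noteq> 0" for z
    using alg_spec0[OF that(1)] alg_sph0[OF that] by (simp add: e_fac_def G_def)
  have guard: "1 - a * z / of_nat q \<noteq> 0" if "z \<noteq> of_nat q / a" "a \<noteq> 0" for a z :: complex
  proof
    assume "1 - a * z / of_nat q = 0"
    hence "a * z / of_nat q = 1" by simp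
    hence "a * z = of_nat q" using qnz by (simp add: divide_eq_eq)
    thus False using that by (simp add: field_simps)
  qed
  show ?thesis
  proof (cases "conductor_exp ord chi = 0")
    case False
    hence fpos: "conductor_exp ord chi > 0" by simp
    define I where "I = (alpha1 / nu) powi (- int (conductor_exp ord chi)) * P.J"
    have conv: "(\<lambda>n. set_lebesgue_integral M (P.Ann n) P.phi) \<longlonglongrightarrow> I"
    proof (rule tendsto_eventually)
      show "\<forall>\<^sub>F n in sequentially. set_lebesgue_integral M (P.Ann n) P.phi = I"
        using eventually_ge_at_top[of "conductor_exp ord chi"]
        by eventually_elim (use P.ann_ram[OF fpos] P.int_g_ram I_def in simp)
    qed
    have Lram: "L_GL1 ord w q (\<lambda>x. c x * chi x) (1/2) = 1" if hc: "\<forall>x\<in>U_n ord 0. c x = 1" for c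
    proof (rule L_GL1_ram)
      show "\<exists>n. \<forall>x\<in>U_n ord n. c x * chi x = 1"
        using hc P.cond_prop[OF hchi] P.Un_mono[of 0 "conductor_exp ord chi"] by (intro exI[of _ "conductor_exp ord chi"]) auto
      obtain u where "u \<in> U_n ord 0" "chi u \<noteq> 1" using P.cond_min[OF fpos] by blast
      thus "\<not> (\<forall>x\<in>U_n ord 0. c x * chi x = 1)" using hc by auto
    qed
    have Lpi1: "L_pi ord w q special chi1 chi2 chi (1/2) = 1"
      unfolding L_pi_def using Lram[OF u1] Lram[OF u2] by simp
    have bf: "(alpha1 / nu) powi (- int (conductor_exp ord chi)) = (alpha2 / of_nat q) ^ conductor_exp ord chi"
      unfolding beta by (simp add: power_int_minus flip: power_inverse)
    have "I = e_fac special q alpha1 alpha2 (conductor_exp ord chi) (chi w) * gauss_sum ord w q M psi chi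
               * L_pi ord w q special chi1 chi2 chi (1/2)"
      using False by (simp add: I_def e_fac_def P.gauss_ram[OF fpos] Lpi1 bf)
    note Ieq = this
    show ?thesis unfolding annE phE
    proof (intro conjI exI[of _ I])
      show "\<forall>n. set_integrable M (P.Ann n) P.phi" using P.ann_integrable by blast
    qed (use conv Ieq False in auto)
  next
    case True
    note f0 = True
    define z where "z = chi w"
    have zs: "cmod z < cmod alpha2" using unr True by (simp add: z_def)
    have z0: "z \<noteq> 0" using cw by (simp add: z_def)
    have za: "z \<noteq> alpha2" using zs by auto
    define I where "I = - inverse (z * (alpha1 / nu)) + (1 - 1 / of_nat q) / (1 - z * (alpha1 / nu) / of_nat q)"
    have small: "cmod (chi w * (alpha1 / nu) / of_nat q) < 1"
    proof -
      have "chi w * (alpha1 / nu) / of_nat q = z / alpha2" unfolding beta z_def using qnz by simp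
      thus ?thesis using zs al2 by (simp add: norm_divide)
    qed
    have conv: "(\<lambda>n. set_lebesgue_integral M (P.Ann n) P.phi) \<longlonglongrightarrow> I"
      using P.unram_limit[OF f0 small] by (simp add: I_def z_def)
    have IG: "I = G z" unfolding I_def beta G_def by (rule alg_I[OF qnz al2 z0 za])
    have ps: "\<And>x. vge ord x 0 \<Longrightarrow> psi x = 1" by (rule P.psi_O)
    have uchi: "\<forall>x\<in>U_n ord 0. chi x = 1" using P.cond_prop[OF hchi] f0 by simp
    have gchi: "gauss_sum ord w q M psi chi = 1"
      by (rule P.gauss0[OF f0 _ ps]) (use uchi in \<open>auto simp: P.U0_iff\<close>)
    have A: "I = e_fac special q alpha1 alpha2 0 (chi w) * gauss_sum ord w q M psi chi
                  * L_pi ord w q special chi1 chi2 chi (1/2)"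
      if "chi w \<noteq> of_nat q / alpha1 \<and> chi w \<noteq> of_nat q / alpha2"
    proof -
      have g1: "1 - alpha1 * z / of_nat q \<noteq> 0" "1 - alpha2 * z / of_nat q \<noteq> 0"
        using guard that al1 al2 by (auto simp: z_def)
      show ?thesis unfolding gchi Lpi_unr[OF uchi] IG z_def[symmetric] using Fz[OF g1] by simp
    qed
    have Gt: "(G \<longlongrightarrow> G z) (at z)"
    proof -
      have "1 - z / alpha2 \<noteq> 0" using za al2 by (simp add: field_simps)
      hence "((\<lambda>z. (1 - alpha2 / z / of_nat q) / (1 - z / alpha2)) \<longlongrightarrow> (1 - alpha2 / z / of_nat q) / (1 - z / alpha2)) (at z)"
        using z0 al2 qnz by (intro tendsto_intros) auto
      thus ?thesis by (simp add: G_def[abs_def])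
    qed
    have ev: "\<forall>\<^sub>F z' in at z. G z' = e_fac special q alpha1 alpha2 0 z' * gauss_sum ord w q M psi (\<lambda>x. z' powi ord x)
                  * L_pi ord w q special chi1 chi2 (\<lambda>x. z' powi ord x) (1/2)"
      using eventually_neq_at_within[of 0 z UNIV] eventually_neq_at_within[of "of_nat q / alpha1" z UNIV]
        eventually_neq_at_within[of "of_nat q / alpha2" z UNIV]
    proof eventually_elim
      case (elim z')
      have g1: "1 - alpha1 * z' / of_nat q \<noteq> 0" "1 - alpha2 * z' / of_nat q \<noteq> 0"
        using guard elim al1 al2 by auto
      have uz: "\<forall>x\<in>U_n ord 0. z' powi ord x = 1" by (simp add: P.U0_iff)
      have c0: "conductor_exp ord (\<lambda>x. z' powi ord x) = 0"
        unfolding conductor_exp_def by (rule Least_eq_0) (use uz in simp)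
      have gz: "gauss_sum ord w q M psi (\<lambda>x. z' powi ord x) = 1"
        by (rule P.gauss0[OF c0 _ ps]) simp
      have zw: "z' powi ord w = z'" by (simp add: P.ord_w)
      show ?case unfolding gz Lpi_unr[OF uz] zw by (rule Fz[OF g1, symmetric])
    qed
    have B: "((\<lambda>z'. e_fac special q alpha1 alpha2 0 z' * gauss_sum ord w q M psi (\<lambda>x. z' powi ord x)
                  * L_pi ord w q special chi1 chi2 (\<lambda>x. z' powi ord x) (1/2)) \<longlongrightarrow> I) (at (chi w))"
      using Lim_transform_eventually[OF Gt ev] IG by (simp add: z_def)
    show ?thesis unfolding annE phE
    proof (intro conjI exI[of _ I])
      show "\<forall>n. set_integrable M (P.Ann n) P.phi" using P.ann_integrable by blast
    qed (use conv A B f0 in auto)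
  qed
qed

end
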